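(* For every real $\omega>0$, $$\zeta(3)=-2\omega^2\sum_{m=1}^\infty\left(\frac{\pi^2m^2}{\omega^2}\log\Big(1+\frac{\omega^2}{\pi^2m^2}\Big)-1\right)+2\omega\,\mathrm{Li}_2(e^{-2\omega})+\mathrm{Li}_3(e^{-2\omega})-2\omega^2\log(e^{2\omega}-1)+\frac{(10\omega+3)\,\omega^2}{3}.$$
   Context: $\zeta$ is the Riemann zeta function and $\mathrm{Li}_k(z)=\sum_{n\ge1}z^n/n^k$ ($|z|\le1$) is the polylogarithm. *)

theory Defs
  imports "HOL-Analysis.Analysis"
begin

definition zeta :: "real \<Rightarrow> real" where
  "zeta s = (\<Sum>n. 1 / (real (Suc n)) powr s)"

definition polylog :: "nat \<Rightarrow> real \<Rightarrow> real" where
  "polylog k z = (\<Sum>n. z ^ Suc n / (real (Suc n)) ^ k)"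

end

theory Submission
  imports Defs "HOL-Real_Asymp.Real_Asymp"
begin

lemma series_deriv:
  fixes f f' :: "nat \<Rightarrow> real \<Rightarrow> real"
  assumes S: "open S" "convex S" "x0 \<in> S" "summable (\<lambda>n. f n x0)"
    and d: "\<And>n x. x \<in> S \<Longrightarrow> (f n has_real_derivative f' n x) (at x)"
    and b: "\<And>n x. x \<in> S \<Longrightarrow> \<bar>f' n x\<bar> \<le> M n" and M: "summable M" and x: "x \<in> S"
  shows "summable (\<lambda>n. f n x)" "((\<lambda>x. \<Sum>n. f n x) has_real_derivative (\<Sum>n. f' n x)) (at x)"
proof -
  have uc: "uniformly_convergent_on S (\<lambda>n x. \<Sum>i<n. f' i x)"
    by (rule Weierstrass_m_test'[OF _ M]) (use b in auto)
  have d': "\<And>n x. x \<in> S \<Longrightarrow> (f n has_real_derivative f' n x) (at x within S)"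
    using d has_field_derivative_at_within by blast
  have xi: "x \<in> interior S" using x S by (simp add: interior_open)
  show "summable (\<lambda>n. f n x)" "((\<lambda>x. \<Sum>n. f n x) has_real_derivative (\<Sum>n. f' n x)) (at x)"
    using has_field_derivative_series'[OF S(2) d' uc S(3,4) xi] by auto
qed

lemma series_cont:
  fixes f :: "nat \<Rightarrow> real \<Rightarrow> real"
  assumes "\<And>n. continuous_on A (f n)" "\<And>n x. x \<in> A \<Longrightarrow> \<bar>f n x\<bar> \<le> M n" "summable M"
  shows "continuous_on A (\<lambda>x. \<Sum>n. f n x)"
proof (rule uniform_limit_theorem[OF _ Weierstrass_m_test])
  show "\<forall>\<^sub>F n in sequentially. continuous_on A (\<lambda>x. \<Sum>i<n. f i x)"
    using assms(1) by (intro always_eventually allI continuous_on_sum) auto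
qed (use assms in auto)

lemma sinh_prod:
  fixes w :: real assumes "w \<noteq> 0"
  shows "(\<lambda>n. \<Prod>k=1..n. 1 + w^2 / (pi^2 * (real k)^2)) \<longlonglongrightarrow> sinh w / w"
proof -
  have "(\<lambda>n. of_real pi * (\<i> * of_real (w/pi)) * (\<Prod>k=1..n. 1 - (\<i> * of_real (w/pi))^2 / of_nat k^2)) \<longlonglongrightarrow> sin (of_real pi * (\<i> * of_real (w/pi)))"
    by (rule sin_product_formula_complex)
  also have "(\<lambda>n. of_real pi * (\<i> * of_real (w/pi)) * (\<Prod>k=1..n. 1 - (\<i> * of_real (w/pi))^2 / of_nat k^2))
     = (\<lambda>n. (\<i> * of_real w) * of_real (\<Prod>k=1..n. 1 + w^2 / (pi^2 * (real k)^2)))"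
  proof
    fix n
    have "(\<Prod>k=1..n. 1 - (\<i> * of_real (w/pi))^2 / of_nat k^2) = of_real (\<Prod>k=1..n. 1 + w^2 / (pi^2 * (real k)^2))"
      by (simp add: power_mult_distrib power_divide)
    then show "of_real pi * (\<i> * of_real (w/pi)) * (\<Prod>k=1..n. 1 - (\<i> * of_real (w/pi))^2 / of_nat k^2)
      = (\<i> * of_real w) * of_real (\<Prod>k=1..n. 1 + w^2 / (pi^2 * (real k)^2))"
      by simp
  qed
  also have "sin (of_real pi * (\<i> * of_real (w/pi))) = \<i> * of_real (sinh w)"
    by (simp add: sin_i_times sinh_def exp_of_real exp_minus)
  finally have "(\<lambda>n. (-\<i> / of_real w) * ((\<i> * of_real w) * of_real (\<Prod>k=1..n. 1 + w^2 / (pi^2 * (real k)^2)))) \<longlonglongrightarrow> (-\<i> / of_real w) * (\<i> * of_real (sinh w))"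
    by (rule tendsto_mult_left)
  then have "(\<lambda>n. of_real (\<Prod>k=1..n. 1 + w^2 / (pi^2 * (real k)^2))) \<longlonglongrightarrow> (of_real (sinh w / w) :: complex)"
    using assms by (simp add: field_simps)
  then show ?thesis by (subst (asm) tendsto_of_real_iff)
qed

lemma prod_shift1: "(\<Prod>k=1..n. f k) = (\<Prod>m<n. f (Suc m) :: real)"
  by (simp add: prod.atLeast1_atMost_eq)

lemma dd: fixes c x :: real assumes "c > 0" shows "((\<lambda>x. ln (1 + x^2 / c)) has_real_derivative 2 * x / (c + x^2)) (at x)"
proof -
  have p: "1 + x^2/c > 0" using assms by (simp add: add_pos_nonneg)
  have "((\<lambda>x. ln (1 + x^2 / c)) has_real_derivative (1/(1 + x^2/c)) * (2*x/c)) (at x)"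
    using assms p by (auto intro!: derivative_eq_intros)
  also have "(1/(1 + x^2/c)) * (2*x/c) = 2 * x / (c + x^2)" using assms p by (simp add: field_simps)
  finally show ?thesis .
qed

lemma U_sums:
  fixes w :: real assumes w: "w \<noteq> 0"
  shows "(\<lambda>m. ln (1 + w^2 / (pi^2 * (real (Suc m))^2))) sums ln (sinh w / w)"
proof -
  have pos: "sinh w / w > 0"
    using w by (cases "w > 0") (auto simp: divide_pos_pos divide_neg_neg)
  have "(\<lambda>n. ln (\<Prod>k=1..n. 1 + w^2 / (pi^2 * (real k)^2))) \<longlonglongrightarrow> ln (sinh w / w)"
    using pos by (intro tendsto_ln sinh_prod w) auto
  also have "(\<lambda>n. ln (\<Prod>k=1..n. 1 + w^2 / (pi^2 * (real k)^2))) =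
       (\<lambda>n. \<Sum>m<n. ln (1 + w^2 / (pi^2 * (real (Suc m))^2)))"
  proof
    fix n
    have "ln (\<Prod>k=1..n. 1 + w^2 / (pi^2 * (real k)^2)) = ln (\<Prod>m<n. 1 + w^2 / (pi^2 * (real (Suc m))^2))"
      by (simp only: prod_shift1)
    also have "\<dots> = (\<Sum>m<n. ln (1 + w^2 / (pi^2 * (real (Suc m))^2)))"
      proof (rule ln_prod)
      fix i
      have "0 < 1 + w^2 / (pi^2 * (real (Suc i))^2)" by (simp add: add_pos_nonneg)
      then show "1 + w^2 / (pi^2 * (real (Suc i))^2) \<noteq> 0" by simp
    qed simp
    finally show "ln (\<Prod>k=1..n. 1 + w^2 / (pi^2 * (real k)^2)) = (\<Sum>m<n. ln (1 + w^2 / (pi^2 * (real (Suc m))^2)))" .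
  qed
  finally show ?thesis by (simp add: sums_def)
qed

lemma inv_sq_summable: "summable (\<lambda>n. 1 / real ((n + 1)^2))"
  using inverse_squares_sums sums_summable by blast

lemma U_deriv:
  fixes w :: real assumes w: "w > 0"
  shows "(\<lambda>m. 2 * w / (pi^2 * (real (Suc m))^2 + w^2)) sums (cosh w / sinh w - 1 / w)"
proof -
  define S where "S = {0 <..< w + 1}"
  define M where "M n = 2 * (w + 1) * (1 / real ((n + 1)^2))" for n
  have M: "summable M" unfolding M_def by (intro summable_mult inv_sq_summable)
  have bnd: "\<bar>2 * x / (pi^2 * (real (Suc m))^2 + x^2)\<bar> \<le> M m" if "x \<in> S" for x m
  proof -
    have x: "0 < x" "x < w + 1" using that by (auto simp: S_def)
    have pi1: "1 \<le> pi^2" using pi_gt3 by (simp add: one_le_power)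
    have c: "real (Suc m)^2 \<le> pi^2 * (real (Suc m))^2 + x^2"
      using mult_right_mono[OF pi1, of "real (Suc m)^2"] by (simp add: add_increasing2)
    have "\<bar>2 * x / (pi^2 * (real (Suc m))^2 + x^2)\<bar> = 2 * x / (pi^2 * (real (Suc m))^2 + x^2)"
      using x by (intro abs_of_nonneg) (auto intro!: divide_nonneg_pos add_pos_nonneg)
    also have "\<dots> \<le> 2 * (w + 1) / real (Suc m)^2"
      using x c by (intro frac_le) auto
    also have "\<dots> = M m" by (simp add: M_def)
    finally show ?thesis .
  qed
  have d: "((\<lambda>x. ln (1 + x^2 / (pi^2 * (real (Suc m))^2))) has_real_derivative 2 * x / (pi^2 * (real (Suc m))^2 + x^2)) (at x)"
    if "x \<in> S" for x m
    by (rule dd) simp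
  have wS: "w \<in> S" using w by (simp add: S_def)
  have sm: "summable (\<lambda>m. ln (1 + w^2 / (pi^2 * (real (Suc m))^2)))" using U_sums[of w] w sums_summable by auto
  note sd = series_deriv[OF _ _ wS sm d bnd M wS]
  have D1: "((\<lambda>x. \<Sum>m. ln (1 + x^2 / (pi^2 * (real (Suc m))^2))) has_real_derivative
            (\<Sum>m. 2 * w / (pi^2 * (real (Suc m))^2 + w^2))) (at w)"
    using sd by (auto simp: S_def)
  have D2: "((\<lambda>x. ln (sinh x / x)) has_real_derivative (cosh w / sinh w - 1 / w)) (at w)"
  proof -
    have "sinh w > 0" using w by simp
    then show ?thesis using w
      by (auto intro!: derivative_eq_intros simp: field_simps power2_eq_square)
  qed
  have D1': "((\<lambda>x. ln (sinh x / x)) has_real_derivative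
            (\<Sum>m. 2 * w / (pi^2 * (real (Suc m))^2 + w^2))) (at w)"
    by (rule has_field_derivative_transform_within_open[OF D1, of "{0<..}"])
       (use w in \<open>auto intro!: sums_unique[symmetric] U_sums simp del: of_nat_Suc\<close>)
  have eq: "(\<Sum>m. 2 * w / (pi^2 * (real (Suc m))^2 + w^2)) = cosh w / sinh w - 1 / w"
    using DERIV_unique[OF D1' D2] .
  have "summable (\<lambda>m. 2 * w / (pi^2 * (real (Suc m))^2 + w^2))"
    by (rule summable_comparison_test[OF _ M]) (use bnd wS in \<open>auto intro!: exI[of _ 0]\<close>)
  then show ?thesis using eq summable_sums by fastforce
qed

lemma T_deriv:
  fixes x :: real
  shows "summable (\<lambda>m. pi^2 * (real (Suc m))^2 * ln (1 + x^2 / (pi^2 * (real (Suc m))^2)) - x^2)"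
    "((\<lambda>x. \<Sum>m. pi^2 * (real (Suc m))^2 * ln (1 + x^2 / (pi^2 * (real (Suc m))^2)) - x^2)
        has_real_derivative (\<Sum>m. - 2 * x^3 / (pi^2 * (real (Suc m))^2 + x^2))) (at x)"
proof -
  define R where "R = \<bar>x\<bar> + 1"
  define S where "S = {-R <..< R}"
  define M where "M n = 2 * R^3 * (1 / real ((n + 1)^2))" for n
  have M: "summable M" unfolding M_def by (intro summable_mult inv_sq_summable)
  have bnd: "\<bar>- 2 * y^3 / (pi^2 * (real (Suc m))^2 + y^2)\<bar> \<le> M m" if "y \<in> S" for y m
  proof -
    have y: "\<bar>y\<bar> < R" using that by (auto simp: S_def)
    have pi1: "1 \<le> pi^2" using pi_gt3 by (simp add: one_le_power)
    have c: "real (Suc m)^2 \<le> pi^2 * (real (Suc m))^2 + y^2"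
      using mult_right_mono[OF pi1, of "real (Suc m)^2"] by (simp add: add_increasing2)
    have "\<bar>- 2 * y^3 / (pi^2 * (real (Suc m))^2 + y^2)\<bar> = 2 * \<bar>y\<bar>^3 / (pi^2 * (real (Suc m))^2 + y^2)"
      by (simp add: abs_mult power_abs add_pos_nonneg)
    also have "\<dots> \<le> 2 * R^3 / real (Suc m)^2"
      using y c by (intro frac_le power_mono) auto
    also have "\<dots> = M m" by (simp add: M_def)
    finally show ?thesis .
  qed
  have d: "((\<lambda>x. pi^2 * (real (Suc m))^2 * ln (1 + x^2 / (pi^2 * (real (Suc m))^2)) - x^2)
        has_real_derivative - 2 * y^3 / (pi^2 * (real (Suc m))^2 + y^2)) (at y)" for y m
  proof -
    define c where "c = pi^2 * (real (Suc m))^2"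
    have c: "c > 0" by (simp add: c_def)
    have h1: "((\<lambda>x. c * ln (1 + x^2 / c)) has_real_derivative c * (2 * y / (c + y^2))) (at y)"
      by (rule DERIV_cmult) (rule dd[OF c])
    have h2: "((\<lambda>x. x^2) has_real_derivative 2 * y) (at y)"
      by (auto intro!: derivative_eq_intros)
    have "((\<lambda>x. c * ln (1 + x^2 / c) - x^2) has_real_derivative c * (2 * y / (c + y^2)) - 2 * y) (at y)"
      by (rule DERIV_diff[OF h1 h2])
    also have "c * (2 * y / (c + y^2)) - 2 * y = - 2 * y^3 / (c + y^2)"
    proof -
      have "c + y*y > 0" using c by (simp add: add_pos_nonneg)
      then have "c + y*y \<noteq> 0" by simp
      then show ?thesis by (simp add: field_simps power2_eq_square power3_eq_cube)
    qed
    finally show ?thesis by (simp add: c_def)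
  qed
  have R: "R > 0" by (simp add: R_def)
  have 0: "0 \<in> S" "x \<in> S" using R by (auto simp: S_def R_def)
  have sm0: "summable (\<lambda>m. pi^2 * (real (Suc m))^2 * ln (1 + 0^2 / (pi^2 * (real (Suc m))^2)) - (0::real)^2)"
    by simp
  note sd = series_deriv[OF _ _ 0(1) sm0 d bnd M 0(2)]
  then show "summable (\<lambda>m. pi^2 * (real (Suc m))^2 * ln (1 + x^2 / (pi^2 * (real (Suc m))^2)) - x^2)"
    "((\<lambda>x. \<Sum>m. pi^2 * (real (Suc m))^2 * ln (1 + x^2 / (pi^2 * (real (Suc m))^2)) - x^2)
        has_real_derivative (\<Sum>m. - 2 * x^3 / (pi^2 * (real (Suc m))^2 + x^2))) (at x)"
    by (auto simp: S_def)
qed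

lemma T_deriv_val:
  fixes w :: real assumes w: "w > 0"
  shows "(\<Sum>m. - 2 * w^3 / (pi^2 * (real (Suc m))^2 + w^2)) = w - w^2 * cosh w / sinh w"
proof -
  have "(\<lambda>m. (-(w^2)) * (2 * w / (pi^2 * (real (Suc m))^2 + w^2))) sums ((-(w^2)) * (cosh w / sinh w - 1 / w))"
    by (intro sums_mult U_deriv w)
  moreover have "(\<lambda>m. (-(w^2)) * (2 * w / (pi^2 * (real (Suc m))^2 + w^2))) = (\<lambda>m. - 2 * w^3 / (pi^2 * (real (Suc m))^2 + w^2))"
    by (auto simp: power2_eq_square power3_eq_cube)
  moreover have "(-(w^2)) * (cosh w / sinh w - 1 / w) = w - w^2 * cosh w / sinh w"
    using w by (simp add: field_simps power2_eq_square)
  ultimately show ?thesis using sums_unique by metis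
qed

lemma Li1:
  fixes q :: real assumes "0 < q" "q < 1"
  shows "(\<lambda>n. q ^ Suc n / real (Suc n)) sums (- ln (1 - q))"
proof -
  have "(\<lambda>n. - ((- (-q))^n) / of_nat n) sums ln (1 + (-q))"
    by (rule ln_series') (use assms in auto)
  then have "(\<lambda>n. - (q^n) / real n) sums ln (1 - q)" by simp
  then have "(\<lambda>n. - (q^Suc n) / real (Suc n)) sums ln (1 - q)"
    by (subst sums_Suc_iff) simp
  from sums_minus[OF this] show ?thesis by simp
qed

lemma P_term_deriv:
  "((\<lambda>x. exp (-2*x) ^ Suc n / real (Suc n) ^ Suc j) has_real_derivative
      - 2 * exp (-2*y) ^ Suc n / real (Suc n) ^ j) (at y)"
proof -
  have "((\<lambda>x. exp (-2*x) ^ Suc n / real (Suc n) ^ Suc j) has_real_derivative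
      real (Suc n) * exp (-2*y) ^ n * (exp (-2*y) * (- 2)) / real (Suc n) ^ Suc j) (at y)"
    by (auto intro!: derivative_eq_intros simp del: of_nat_Suc power_Suc)
  also have "real (Suc n) * exp (-2*y) ^ n * (exp (-2*y) * (- 2)) / real (Suc n) ^ Suc j
      = - 2 * exp (-2*y) ^ Suc n / real (Suc n) ^ j"
    by (simp del: of_nat_Suc add: field_simps)
  finally show ?thesis .
qed

lemma P_deriv:
  fixes w :: real assumes w: "w > 0"
  shows "summable (\<lambda>n. exp (-2*w) ^ Suc n / real (Suc n) ^ Suc j)"
    "((\<lambda>x. \<Sum>n. exp (-2*x) ^ Suc n / real (Suc n) ^ Suc j) has_real_derivative
      (\<Sum>n. - 2 * exp (-2*w) ^ Suc n / real (Suc n) ^ j)) (at w)"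
proof -
  define a where "a = w / 2"
  define S where "S = {a <..}"
  define r where "r = exp (-2*a)"
  have a: "a > 0" "w \<in> S" using w by (auto simp: a_def S_def)
  have r: "0 < r" "r < 1" using a by (auto simp: r_def)
  define M where "M n = 2 * r * r ^ n" for n
  have M: "summable M" unfolding M_def using r by (intro summable_mult summable_geometric) auto
  have qle: "0 < exp (-2*y)" "exp (-2*y) \<le> r" if "y \<in> S" for y
    using that by (auto simp: S_def r_def)
  have bnd: "\<bar>- 2 * exp (-2*y) ^ Suc n / real (Suc n) ^ j\<bar> \<le> M n" if "y \<in> S" for y n
  proof -
    have "\<bar>- 2 * exp (-2*y) ^ Suc n / real (Suc n) ^ j\<bar> = 2 * exp (-2*y) ^ Suc n / real (Suc n) ^ j"
      by (simp add: abs_mult)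
    also have "\<dots> \<le> 2 * exp (-2*y) ^ Suc n / 1"
      by (intro divide_left_mono) (auto simp del: of_nat_Suc)
    also have "\<dots> \<le> 2 * r ^ Suc n"
      using qle[OF that] r by (simp, intro mult_mono power_mono) auto
    also have "\<dots> = M n" by (simp add: M_def)
    finally show ?thesis .
  qed
  have bnd0: "\<bar>exp (-2*w) ^ Suc n / real (Suc n) ^ Suc j\<bar> \<le> M n" for n
  proof -
    have "\<bar>exp (-2*w) ^ Suc n / real (Suc n) ^ Suc j\<bar> = exp (-2*w) ^ Suc n / real (Suc n) ^ Suc j"
      by simp
    also have "\<dots> \<le> exp (-2*w) ^ Suc n / 1"
    proof (intro divide_left_mono)
      show "1 \<le> real (Suc n) ^ Suc j" by (rule one_le_power) simp
    qed auto
    also have "\<dots> \<le> 2 * r ^ Suc n"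
      using qle[OF a(2)] by (smt (verit) div_by_1 power_mono zero_le_power exp_ge_zero)
    also have "\<dots> = M n" by (simp add: M_def)
    finally show ?thesis .
  qed
  show sm: "summable (\<lambda>n. exp (-2*w) ^ Suc n / real (Suc n) ^ Suc j)"
    by (rule summable_comparison_test[OF _ M]) (use bnd0 in auto)
  note sd = series_deriv[OF _ _ a(2) sm P_term_deriv bnd M a(2)]
  then show "((\<lambda>x. \<Sum>n. exp (-2*x) ^ Suc n / real (Suc n) ^ Suc j) has_real_derivative
      (\<Sum>n. - 2 * exp (-2*w) ^ Suc n / real (Suc n) ^ j)) (at w)"
    by (auto simp: S_def)
qed

lemma coth_exp: "(w::real) > 0 \<Longrightarrow> cosh w / sinh w = (exp (2*w) + 1) / (exp (2*w) - 1)"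
proof -
  assume w: "w > (0::real)"
  define a where "a = exp w"
  have a: "a > 1" using w by (simp add: a_def)
  have e: "exp (2*w) = a * a" unfolding a_def by (metis exp_add mult_2)
  have c: "cosh w = (a*a+1)/(2*a)" 
    unfolding cosh_def exp_minus a_def[symmetric] using a by (simp add: field_simps)
  have s: "sinh w = (a*a-1)/(2*a)"
    unfolding sinh_def exp_minus a_def[symmetric] using a by (simp add: field_simps)
  have a0: "2*a \<noteq> 0" using a by simp
  show ?thesis unfolding e c s using a0 by simp
qed

lemma ln_exp2: "(w::real) > 0 \<Longrightarrow> ln (exp (2*w) - 1) = 2*w + ln (1 - exp (-2*w))"
proof -
  assume w: "w > (0::real)"
  have "exp (2*w) - 1 = exp (2*w) * (1 - exp (-2*w))"
    by (simp add: algebra_simps flip: exp_add)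
  moreover have "1 - exp (-2*w) > 0" using w by simp
  ultimately show ?thesis by (simp add: ln_mult)
qed

lemma alg0: fixes w P L Bq :: real
  shows "- 2 * (w - (w^2 * Bq - w^2)) + (2 * P + 2 * w * (2 * L)) + (- 2 * P)
      - (2 * (2 * w) * (2*w + L) + 2 * w^2 * Bq)
      + (10 * w^2 + (10 * w + 3) * (2 * w)) / 3 = 0"
  by (simp add: algebra_simps power2_eq_square)
lemma alg: fixes s E w P L :: real assumes "s > 0" "E > 1"
  shows "- 2 * (w - w^2 * (s * ((E + 1) / (E - 1))) / s) + (2 * P + 2 * w * (2 * L)) + (- 2 * P)
      - (2 * (2 * w) * (2*w + L) + 2 * w^2 * (E * 2 / (E - 1)))
      + (10 * w^2 + (10 * w + 3) * (2 * w)) / 3 = 0"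
proof -
  have ne: "E - 1 \<noteq> 0" using assms by simp
  have e: "w^2 * (s * ((E + 1) / (E - 1))) / s = w^2 * (E * 2 / (E - 1)) - w^2"
  proof -
    have g: "w^2 * (s * X) / s = w^2 * X" for X :: real using assms by simp
    have x: "(E + 1) / (E - 1) = E * 2 / (E - 1) - 1" using ne by (simp add: field_simps)
    show ?thesis unfolding g x by (simp add: right_diff_distrib)
  qed
  show ?thesis unfolding e by (rule alg0)
qed

theorem mainTheorem18:
  fixes \<omega> :: real
  assumes "\<omega> > 0"
  shows "zeta 3 =
    - 2 * \<omega>\<^sup>2 * (\<Sum>m. (pi\<^sup>2 * (real (Suc m))\<^sup>2 / \<omega>\<^sup>2)
                        * ln (1 + \<omega>\<^sup>2 / (pi\<^sup>2 * (real (Suc m))\<^sup>2)) - 1)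
    + 2 * \<omega> * polylog 2 (exp (- 2 * \<omega>))
    + polylog 3 (exp (- 2 * \<omega>))
    - 2 * \<omega>\<^sup>2 * ln (exp (2 * \<omega>) - 1)
    + (10 * \<omega> + 3) * \<omega>\<^sup>2 / 3"
proof -
  define T where "T x = (\<Sum>m. pi^2 * (real (Suc m))^2 * ln (1 + x^2 / (pi^2 * (real (Suc m))^2)) - x^2)" for x :: real
  define P2 where "P2 x = (\<Sum>n. exp (-2*x) ^ Suc n / real (Suc n) ^ 2)" for x :: real
  define P3 where "P3 x = (\<Sum>n. exp (-2*x) ^ Suc n / real (Suc n) ^ 3)" for x :: real
  define G where "G x = - 2 * T x + 2 * x * P2 x + P3 x - 2 * x^2 * ln (exp (2 * x) - 1) + (10 * x + 3) * x^2 / 3" for x :: real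
  have s12: "Suc 1 = (2::nat)" "Suc 2 = (3::nat)" by simp_all
  have dT: "(T has_real_derivative (w - w^2 * cosh w / sinh w)) (at w)" if "w > 0" for w
    using T_deriv(2)[of w] T_deriv_val[OF that] unfolding T_def[abs_def] by simp
  have sP2: "summable (\<lambda>n. exp (-2*w) ^ Suc n / real (Suc n) ^ 2)" if "w > 0" for w
    using P_deriv(1)[OF that, of 1] by (simp only: s12)
  have dP2: "(P2 has_real_derivative 2 * ln (1 - exp (-2*w))) (at w)" if "w > 0" for w
  proof -
    have "(\<lambda>n. (-2) * (exp (-2*w) ^ Suc n / real (Suc n))) sums ((-2) * (- ln (1 - exp (-2*w))))"
      by (intro sums_mult Li1) (use that in auto)
    then have "(\<Sum>n. - 2 * exp (-2*w) ^ Suc n / real (Suc n) ^ 1) = 2 * ln (1 - exp (-2*w))"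
      by (simp add: sums_iff)
    then show ?thesis using P_deriv(2)[OF that, of 1] unfolding P2_def[abs_def] by (simp only: s12)
  qed
  have dP3: "(P3 has_real_derivative - 2 * P2 w) (at w)" if "w > 0" for w
  proof -
    have "(\<Sum>n. - 2 * exp (-2*w) ^ Suc n / real (Suc n) ^ 2) = - 2 * P2 w"
      unfolding P2_def using sP2[OF that] by (subst suminf_mult[symmetric]) auto
    then show ?thesis using P_deriv(2)[OF that, of 2] unfolding P3_def[abs_def] by (simp only: s12)
  qed
  have dG: "(G has_real_derivative 0) (at w)" if w: "w > 0" for w
  proof -
    have pos: "exp (2*w) - 1 > 0" using w by simp
    have "(G has_real_derivative
      - 2 * (w - w^2 * cosh w / sinh w) + (2 * P2 w + 2 * w * (2 * ln (1 - exp (-2*w)))) + (- 2 * P2 w)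
      - (2 * (2 * w) * ln (exp (2 * w) - 1) + 2 * w^2 * (exp (2*w) * 2 / (exp (2 * w) - 1)))
      + (10 * w^2 + (10 * w + 3) * (2 * w)) / 3) (at w)"
      unfolding G_def[abs_def] using pos
      by (auto intro!: derivative_eq_intros dT[OF w] dP2[OF w] dP3[OF w] simp: power2_eq_square) (simp_all add: field_simps)
    moreover have "- 2 * (w - w^2 * cosh w / sinh w) + (2 * P2 w + 2 * w * (2 * ln (1 - exp (-2*w)))) + (- 2 * P2 w)
      - (2 * (2 * w) * ln (exp (2 * w) - 1) + 2 * w^2 * (exp (2*w) * 2 / (exp (2 * w) - 1)))
      + (10 * w^2 + (10 * w + 3) * (2 * w)) / 3 = 0"
    proof -
      have sh: "sinh w > 0" using w by simp
      have ch: "cosh w = sinh w * ((exp (2*w) + 1) / (exp (2*w) - 1))"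
        using coth_exp[OF w] sh by (simp add: field_simps)
      have E1: "exp (2*w) > 1" using w by simp
      show ?thesis
        unfolding ch ln_exp2[OF w]
        by (rule alg[OF sh E1])
    qed
    ultimately show ?thesis by simp
  qed
  have "\<exists>C. \<forall>x\<in>{0<..}. G x = C"
  proof (rule has_field_derivative_zero_constant)
    show "convex {0::real<..}" by simp
    fix x :: real assume "x \<in> {0<..}"
    then show "(G has_field_derivative 0) (at x within {0<..})"
      using dG[of x] has_field_derivative_at_within by simp
  qed
  then obtain C where C: "\<And>x. x \<in> {0<..} \<Longrightarrow> G x = C" by blast
  have T0: "T 0 = 0" by (simp add: T_def)
  have limT: "(T \<longlongrightarrow> 0) (at_right 0)"
  proof -
    have "isCont T 0" using DERIV_isCont[OF T_deriv(2)[of 0]] unfolding T_def[abs_def] .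
    then have "(T \<longlongrightarrow> 0) (at 0)" using T0 by (simp add: isCont_def)
    then show ?thesis using tendsto_within_subset[OF _ subset_UNIV] by blast
  qed
  define B where "B = (\<Sum>n. 1 / real (Suc n) ^ 2)"
  have sB: "summable (\<lambda>n. 1 / real (Suc n) ^ 2)"
    using inv_sq_summable by (simp add: add.commute)
  have P2B: "0 \<le> P2 x \<and> P2 x \<le> B" if "x > 0" for x
  proof
    show "0 \<le> P2 x" unfolding P2_def by (intro suminf_nonneg sP2 that) simp
    show "P2 x \<le> B" unfolding P2_def B_def
    proof (rule suminf_le[OF _ sP2[OF that] sB])
      fix n
      have "exp (-2*x) ^ Suc n \<le> 1" using that by (intro power_le_one) auto
      then show "exp (-2*x) ^ Suc n / real (Suc n) ^ 2 \<le> 1 / real (Suc n) ^ 2"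
        by (intro divide_right_mono) auto
    qed
  qed
  have ev: "eventually (\<lambda>x. x > 0) (at_right (0::real))" by (simp add: eventually_at_right_less)
  have limP2: "((\<lambda>x. 2 * x * P2 x) \<longlongrightarrow> 0) (at_right 0)"
  proof (rule tendsto_sandwich)
    show "eventually (\<lambda>x. 0 \<le> 2 * x * P2 x) (at_right (0::real))"
      using ev by eventually_elim (use P2B in auto)
    show "eventually (\<lambda>x. 2 * x * P2 x \<le> 2 * x * B) (at_right (0::real))"
      using ev by eventually_elim (use P2B in auto)
    show "((\<lambda>x. 0) \<longlongrightarrow> (0::real)) (at_right 0)" by simp
    have "((\<lambda>x. 2 * x * B) \<longlongrightarrow> 2 * 0 * B) (at_right (0::real))"
      by (intro tendsto_intros)
    then show "((\<lambda>x. 2 * x * B) \<longlongrightarrow> (0::real)) (at_right 0)" by simp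
  qed
  have cP3: "continuous_on {0..} P3"
    unfolding P3_def
  proof (rule series_cont[OF _ _ inv_sq_summable])
    show "continuous_on {0..} (\<lambda>x. exp (-2*x) ^ Suc n / real (Suc n) ^ 3)" for n
      by (intro continuous_intros) auto
    fix n and x :: real assume x: "x \<in> {0..}"
    have q: "exp (-2*x) ^ Suc n \<le> 1" using x by (intro power_le_one) auto
    have le: "real (Suc n) ^ 2 \<le> real (Suc n) ^ 3" by (rule power_increasing) auto
    have "\<bar>exp (-2*x) ^ Suc n / real (Suc n) ^ 3\<bar> = exp (-2*x) ^ Suc n / real (Suc n) ^ 3" by simp
    also have "\<dots> \<le> 1 / real (Suc n) ^ 2"
      using q le by (intro frac_le) auto
    also have "\<dots> = 1 / real ((n + 1)^2)" by simp
    finally show "\<bar>exp (-2*x) ^ Suc n / real (Suc n) ^ 3\<bar> \<le> 1 / real ((n + 1)^2)" .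
  qed
  have P30: "P3 0 = zeta 3"
    unfolding P3_def zeta_def by (simp add: powr_numeral)
  have limP3: "(P3 \<longlongrightarrow> zeta 3) (at_right 0)"
  proof -
    have "(P3 \<longlongrightarrow> P3 0) (at 0 within {0..})"
      using cP3 by (simp add: continuous_on_def)
    then have "(P3 \<longlongrightarrow> zeta 3) (at 0 within {0..})" using P30 by simp
    then show ?thesis by (rule tendsto_within_subset) auto
  qed
  have limL: "((\<lambda>x::real. 2 * x^2 * ln (exp (2 * x) - 1)) \<longlongrightarrow> 0) (at_right 0)"
    by real_asymp
  have limQ: "((\<lambda>x::real. (10 * x + 3) * x^2 / 3) \<longlongrightarrow> 0) (at_right 0)"
    by real_asymp
  have "(G \<longlongrightarrow> - 2 * 0 + 0 + zeta 3 - 0 + 0) (at_right 0)"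
    unfolding G_def[abs_def]
    by (intro tendsto_add tendsto_diff tendsto_mult_left limT limP2 limP3 limL limQ)
  then have limG: "(G \<longlongrightarrow> zeta 3) (at_right 0)" by simp
  have lc: "((\<lambda>x. C) \<longlongrightarrow> zeta 3) (at_right (0::real))"
  proof -
    have ev2: "eventually (\<lambda>x. G x = C) (at_right 0)"
      using ev by eventually_elim (use C in auto)
    show ?thesis using Lim_transform_eventually[OF limG ev2] .
  qed
  have Cz: "C = zeta 3"
    by (rule tendsto_unique[OF trivial_limit_at_right_real tendsto_const lc])
  have Gw: "G \<omega> = zeta 3" using C[of \<omega>] assms Cz by simp
  have sT: "summable (\<lambda>m. pi^2 * (real (Suc m))^2 * ln (1 + \<omega>^2 / (pi^2 * (real (Suc m))^2)) - \<omega>^2)"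
    by (rule T_deriv(1))
  have summ: "(\<lambda>m. (pi\<^sup>2 * (real (Suc m))\<^sup>2 / \<omega>\<^sup>2) * ln (1 + \<omega>\<^sup>2 / (pi\<^sup>2 * (real (Suc m))\<^sup>2)) - 1)
     = (\<lambda>m. (pi^2 * (real (Suc m))^2 * ln (1 + \<omega>^2 / (pi^2 * (real (Suc m))^2)) - \<omega>^2) / \<omega>^2)"
    using assms by (auto simp: field_simps)
  have "(\<Sum>m. (pi\<^sup>2 * (real (Suc m))\<^sup>2 / \<omega>\<^sup>2) * ln (1 + \<omega>\<^sup>2 / (pi\<^sup>2 * (real (Suc m))\<^sup>2)) - 1) = T \<omega> / \<omega>^2"
    unfolding summ T_def by (rule suminf_divide[OF sT])
  then have "- 2 * \<omega>\<^sup>2 * (\<Sum>m. (pi\<^sup>2 * (real (Suc m))\<^sup>2 / \<omega>\<^sup>2) * ln (1 + \<omega>\<^sup>2 / (pi\<^sup>2 * (real (Suc m))\<^sup>2)) - 1) = - 2 * T \<omega>"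
    using assms by simp
  moreover have "polylog 2 (exp (- 2 * \<omega>)) = P2 \<omega>" "polylog 3 (exp (- 2 * \<omega>)) = P3 \<omega>"
    by (simp_all add: polylog_def P2_def P3_def)
  ultimately show ?thesis using Gw unfolding G_def by simp
qed

end
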